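(* Under the setting and hypothesis of Theorem 4 (recalled in the context), let $U=\{U_1,\dots,U_L\}$ be a partition of $[n]$ that is conditionally independent of $Y_{1:n}$ given $(X_{1:n},A_{1:n})$. Let $N_l^0=|U_l\cap I_{A=0}|$, $\bar U_l=U_l\cup I_{A=1}$, and, assuming $N^{(0)}\ge1$, $\alpha_l=\dfrac{N_l^0N^{(0)}}{\sum_{l'=1}^L(N_{l'}^0)^2}\,\alpha$. For each $l$ with $N_l^0\ge1$, let $\hat C^l$ be the set $\hat C^2$ of the context computed from the data indexed by $\bar U_l$ only (with all distinct feature values, counts and $N^{(0)}$ computed within $\bar U_l$) at level $\alpha_l$ in place of $\alpha$. For $i\in I_{A=0}$ let $l_i$ satisfy $i\in U_{l_i}$ and set $\hat C^2_U(X_i,i)=\hat C^{l_i}(X_i)$. Then $$\mathbb E\Big[\Big(\frac{1}{N^{(0)}}\sum_{i\in I_{A=0}}\mathbf 1\{Y_i\notin\hat C_U^2(X_i,i)\}\Big)^2\ \Big|\ X_{1:n},A_{1:n}\Big]\le\alpha^2.$$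
   Context: Setting: $(X_i,A_i,Y_i)_{1\le i\le n}$ random, $Y_i$ observed only when $A_i=1$; $X'_1,\dots,X'_M$ distinct feature values, $I_k=\{i:X_i=X'_k\}$; hypothesis: conditionally on $(X_{1:n},A_{1:n})$ the law of $Y_{1:n}$ is invariant under permutations of $[n]$ preserving each $I_k$. $s$ fixed measurable score, $S_i=s(X_i,Y_i)$, $\bar S_i=S_i$ if $A_i=1$ and $+\infty$ if $A_i=0$. $I_{A=0}=\{i:A_i=0\}$, $I_{A=1}=\{i:A_i=1\}$, $N^{(0)}=|I_{A=0}|$, $N_k=|I_k|$, $N_k^0=|I_k\cap I_{A=0}|$. For a dataset with $N^{(0)}\ge1$ and level $\beta$, $\hat C^2(x)=\{y:s(x,y)\le Q_{1-\beta^2}(\Pi)\}$ where $\Pi=\sum_k\sum_{i\in I_k}\frac{N_k^0}{(N^{(0)})^2N_k}\delta_{\bar S_i}+\sum_k\sum_{i\ne j\in I_k}\frac{N_k^0(N_k^0-1)}{(N^{(0)})^2N_k(N_k-1)}\delta_{\min\{\bar S_i,\bar S_j\}}+\sum_{k\ne k'}\sum_{i\in I_k,j\in I_{k'}}\frac{N_k^0N_{k'}^0}{(N^{(0)})^2N_kN_{k'}}\delta_{\min\{\bar S_i,\bar S_j\}}$ (the middle coefficient is $0$ if $N_k=1$), and $Q_{1-\gamma}(P)=\inf\{t:\mathbb P_{T\sim P}(T\le t)\ge1-\gamma\}$ (with $Q_{1-\gamma}=+\infty$ convention-free: if $\gamma\ge1$ the quantile is $-\infty$ or the infimum of the support as given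 by the formula). Miscoverage proportions over empty index sets are $0$. *)

theory Defs
  imports "HOL-Probability.Probability"
begin

(* Conformal construction C^2 of the context, computed from the data indexed by a
   finite index set J (features x, missingness indicators a, outcomes y, score s). *)

definition cls :: "(nat \<Rightarrow> 'x) \<Rightarrow> nat set \<Rightarrow> nat \<Rightarrow> nat set" where
  "cls x J i = {j \<in> J. x j = x i}"

definition zeros :: "(nat \<Rightarrow> bool) \<Rightarrow> nat set \<Rightarrow> nat set" where
  "zeros a J = {i \<in> J. \<not> a i}"

definition sbar :: "('x \<Rightarrow> 'y \<Rightarrow> real) \<Rightarrow> (nat \<Rightarrow> 'x) \<Rightarrow> (nat \<Rightarrow> bool) \<Rightarrow> (nat \<Rightarrow> 'y) \<Rightarrow> nat \<Rightarrow> ereal" where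
  "sbar s x a y i = (if a i then ereal (s (x i) (y i)) else \<infinity>)"

definition piw1 :: "(nat \<Rightarrow> 'x) \<Rightarrow> (nat \<Rightarrow> bool) \<Rightarrow> nat set \<Rightarrow> nat \<Rightarrow> real" where
  "piw1 x a J i = real (card (cls x J i \<inter> zeros a J))
      / ((real (card (zeros a J)))\<^sup>2 * real (card (cls x J i)))"

(* weight of the atom at min(\<bar>S_i, \<bar>S_j), for an ordered pair i \<noteq> j;
   same class: middle term (division by 0 gives 0 when N_k = 1); different classes: last term *)
definition piw2 :: "(nat \<Rightarrow> 'x) \<Rightarrow> (nat \<Rightarrow> bool) \<Rightarrow> nat set \<Rightarrow> nat \<Rightarrow> nat \<Rightarrow> real" where
  "piw2 x a J i j =
     (let N0 = real (card (zeros a J));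
          Nk = real (card (cls x J i)); Nk0 = real (card (cls x J i \<inter> zeros a J));
          Nl = real (card (cls x J j)); Nl0 = real (card (cls x J j \<inter> zeros a J))
      in if x i = x j then Nk0 * (Nk0 - 1) / (N0\<^sup>2 * Nk * (Nk - 1))
         else Nk0 * Nl0 / (N0\<^sup>2 * Nk * Nl))"

definition Pi_cdf :: "('x \<Rightarrow> 'y \<Rightarrow> real) \<Rightarrow> (nat \<Rightarrow> 'x) \<Rightarrow> (nat \<Rightarrow> bool) \<Rightarrow> (nat \<Rightarrow> 'y)
                      \<Rightarrow> nat set \<Rightarrow> ereal \<Rightarrow> real" where
  "Pi_cdf s x a y J t =
     (\<Sum>i\<in>J. piw1 x a J i * (if sbar s x a y i \<le> t then 1 else 0))
   + (\<Sum>i\<in>J. \<Sum>j\<in>J - {i}. piw2 x a J i j *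
        (if min (sbar s x a y i) (sbar s x a y j) \<le> t then 1 else 0))"

definition quant :: "(ereal \<Rightarrow> real) \<Rightarrow> real \<Rightarrow> ereal" where
  "quant F \<gamma> = Inf {t. F t \<ge> 1 - \<gamma>}"

definition C2 :: "('x \<Rightarrow> 'y \<Rightarrow> real) \<Rightarrow> (nat \<Rightarrow> 'x) \<Rightarrow> (nat \<Rightarrow> bool) \<Rightarrow> (nat \<Rightarrow> 'y)
                  \<Rightarrow> nat set \<Rightarrow> real \<Rightarrow> 'x \<Rightarrow> 'y set" where
  "C2 s x a y J \<beta> xv = {yv. ereal (s xv yv) \<le> quant (Pi_cdf s x a y J) (\<beta>\<^sup>2)}"

definition Ublk :: "nat \<Rightarrow> (nat \<Rightarrow> nat) \<Rightarrow> nat \<Rightarrow> nat set" where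
  "Ublk n lab l = {i \<in> {..<n}. lab i = l}"

definition Ubar :: "nat \<Rightarrow> (nat \<Rightarrow> bool) \<Rightarrow> (nat \<Rightarrow> nat) \<Rightarrow> nat \<Rightarrow> nat set" where
  "Ubar n a lab l = Ublk n lab l \<union> {i \<in> {..<n}. a i}"

definition alpha_l :: "nat \<Rightarrow> nat \<Rightarrow> (nat \<Rightarrow> bool) \<Rightarrow> (nat \<Rightarrow> nat) \<Rightarrow> real \<Rightarrow> nat \<Rightarrow> real" where
  "alpha_l n L a lab \<alpha> l =
     real (card (Ublk n lab l \<inter> zeros a {..<n})) * real (card (zeros a {..<n}))
     / (\<Sum>l'<L. (real (card (Ublk n lab l' \<inter> zeros a {..<n})))\<^sup>2) * \<alpha>"

definition CU :: "('x \<Rightarrow> 'y \<Rightarrow> real) \<Rightarrow> (nat \<Rightarrow> 'x) \<Rightarrow> (nat \<Rightarrow> bool) \<Rightarrow> (nat \<Rightarrow> 'y)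
                  \<Rightarrow> (nat \<Rightarrow> nat) \<Rightarrow> nat \<Rightarrow> nat \<Rightarrow> real \<Rightarrow> nat \<Rightarrow> 'y set" where
  "CU s x a y lab n L \<alpha> i =
     C2 s x a y (Ubar n a lab (lab i)) (alpha_l n L a lab \<alpha> (lab i)) (x i)"

definition miscov :: "('x \<Rightarrow> 'y \<Rightarrow> real) \<Rightarrow> (nat \<Rightarrow> 'x) \<Rightarrow> (nat \<Rightarrow> bool) \<Rightarrow> (nat \<Rightarrow> 'y)
                      \<Rightarrow> (nat \<Rightarrow> nat) \<Rightarrow> nat \<Rightarrow> nat \<Rightarrow> real \<Rightarrow> real" where
  "miscov s x a y lab n L \<alpha> =
     (if zeros a {..<n} = {} then 0 else
      (\<Sum>i\<in>zeros a {..<n}. if y i \<notin> CU s x a y lab n L \<alpha> i then 1 else 0)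
        / real (card (zeros a {..<n})))"

end

theory Submission
  imports Defs
begin


lemma type_sum:
  fixes \<tau> :: "'a \<Rightarrow> 'b" and g :: "'a \<Rightarrow> real"
  assumes fin: "finite B" and sub: "A \<subseteq> B"
    and cst: "\<And>b b'. b\<in>B \<Longrightarrow> b'\<in>B \<Longrightarrow> \<tau> b = \<tau> b' \<Longrightarrow> g b = g b'"
  shows "(\<Sum>b\<in>B. real (card {a\<in>A. \<tau> a = \<tau> b}) / real (card {b'\<in>B. \<tau> b' = \<tau> b}) * g b)
         = (\<Sum>a\<in>A. g a)"
proof -
  define G where "G t = g (SOME b. b\<in>B \<and> \<tau> b = t)" for t
  have G: "g b = G (\<tau> b)" if "b \<in> B" for b
  proof -
    have "(SOME b'. b'\<in>B \<and> \<tau> b' = \<tau> b) \<in> B \<and> \<tau> (SOME b'. b'\<in>B \<and> \<tau> b' = \<tau> b) = \<tau> b"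
      by (rule someI[of _ b]) (use that in auto)
    then show ?thesis unfolding G_def using cst that by metis
  qed
  have finA: "finite A" using fin sub finite_subset by blast
  have "(\<Sum>b\<in>B. real (card {a\<in>A. \<tau> a = \<tau> b}) / real (card {b'\<in>B. \<tau> b' = \<tau> b}) * g b)
      = (\<Sum>t\<in>\<tau>`B. \<Sum>b\<in>{b\<in>B. \<tau> b = t}. real (card {a\<in>A. \<tau> a = \<tau> b}) / real (card {b'\<in>B. \<tau> b' = \<tau> b}) * g b)"
    by (rule sum.group[symmetric]) (use fin in auto)
  also have "\<dots> = (\<Sum>t\<in>\<tau>`B. real (card {a\<in>A. \<tau> a = t}) * G t)"
  proof (rule sum.cong[OF refl])
    fix t assume t: "t \<in> \<tau>`B"
    have ne: "card {b'\<in>B. \<tau> b' = t} > 0" using t fin by (auto simp: card_gt_0_iff)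
    have "(\<Sum>b\<in>{b\<in>B. \<tau> b = t}. real (card {a\<in>A. \<tau> a = \<tau> b}) / real (card {b'\<in>B. \<tau> b' = \<tau> b}) * g b)
        = (\<Sum>b\<in>{b\<in>B. \<tau> b = t}. real (card {a\<in>A. \<tau> a = t}) / real (card {b'\<in>B. \<tau> b' = t}) * G t)"
      by (rule sum.cong) (auto simp: G)
    also have "\<dots> = real (card {a\<in>A. \<tau> a = t}) * G t" using ne by simp
    finally show "(\<Sum>b\<in>{b\<in>B. \<tau> b = t}. real (card {a\<in>A. \<tau> a = \<tau> b}) / real (card {b'\<in>B. \<tau> b' = \<tau> b}) * g b) = real (card {a\<in>A. \<tau> a = t}) * G t" .
  qed
  also have "\<dots> = (\<Sum>t\<in>\<tau>`B. \<Sum>a\<in>{a\<in>A. \<tau> a = t}. g a)"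
  proof (rule sum.cong[OF refl])
    fix t assume t: "t \<in> \<tau>`B"
    have "(\<Sum>a\<in>{a\<in>A. \<tau> a = t}. g a) = (\<Sum>a\<in>{a\<in>A. \<tau> a = t}. G t)"
      by (rule sum.cong) (use sub G in auto)
    then show "real (card {a\<in>A. \<tau> a = t}) * G t = (\<Sum>a\<in>{a\<in>A. \<tau> a = t}. g a)" by simp
  qed
  also have "\<dots> = (\<Sum>a\<in>A. g a)"
    by (rule sum.group) (use fin finA sub in auto)
  finally show ?thesis .
qed

definition cdfg :: "('k \<Rightarrow> real) \<Rightarrow> 'k set \<Rightarrow> ('k \<Rightarrow> ereal) \<Rightarrow> ereal \<Rightarrow> real" where
  "cdfg w K v t = (\<Sum>k\<in>K. w k * (if v k \<le> t then 1 else 0))"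

lemma cdfg_mono_gen:
  assumes "\<forall>k\<in>K. w k \<ge> 0" "\<forall>k\<in>K. v k \<le> t2 \<longrightarrow> v k \<le> t1"
  shows "cdfg w K v t2 \<le> cdfg w K v t1"
  unfolding cdfg_def by (rule sum_mono) (use assms in auto)

lemma cdfg_attain:
  assumes fin: "finite K" and w: "\<forall>k\<in>K. w k \<ge> 0" and ne: "{t. cdfg w K v t \<ge> c} \<noteq> {}"
  shows "cdfg w K v (Inf {t. cdfg w K v t \<ge> c}) \<ge> c"
proof -
  define S where "S = {t. cdfg w K v t \<ge> c}"
  define q where "q = Inf S"
  have "\<exists>ts\<in>S. \<forall>k\<in>K. v k \<le> ts \<longrightarrow> v k \<le> q"
  proof (cases "{k\<in>K. q < v k} = {}")
    case True
    from ne obtain t0 where "t0 \<in> S" unfolding S_def by auto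
    then show ?thesis using True by (intro bexI[of _ t0]) (auto simp: not_less)
  next
    case False
    have "\<forall>k\<in>{k\<in>K. q < v k}. \<exists>t\<in>S. t < v k" unfolding q_def by (auto simp: Inf_less_iff)
    then obtain tk where tk: "\<And>k. k\<in>{k\<in>K. q < v k} \<Longrightarrow> tk k \<in> S \<and> tk k < v k" by metis
    define ts where "ts = Min (tk ` {k\<in>K. q < v k})"
    have finB: "finite {k\<in>K. q < v k}" using fin by auto
    have "ts \<in> tk ` {k\<in>K. q < v k}" unfolding ts_def using False finB by (intro Min_in) auto
    then have tsS: "ts \<in> S" using tk by auto
    have "v k \<le> q" if "k \<in> K" "v k \<le> ts" for k
    proof (rule ccontr)
      assume "\<not> v k \<le> q"
      then have kB: "k \<in> {k\<in>K. q < v k}" using that by auto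
      have "ts \<le> tk k" unfolding ts_def using finB kB by (intro Min_le) auto
      with tk[OF kB] that show False by auto
    qed
    then show ?thesis using tsS by blast
  qed
  then obtain ts where "ts \<in> S" "\<forall>k\<in>K. v k \<le> ts \<longrightarrow> v k \<le> q" by blast
  then have "c \<le> cdfg w K v ts" "cdfg w K v ts \<le> cdfg w K v q"
    unfolding S_def using cdfg_mono_gen[OF w] by auto
  then show ?thesis unfolding q_def S_def by linarith
qed

lemma cdfg_quant_less:
  assumes fin: "finite K" and w: "\<forall>k\<in>K. w k \<ge> 0" and m: "-\<infinity> < m"
  shows "Inf {t. cdfg w K v t \<ge> c} < m \<longleftrightarrow>
    (cdfg w K v (-\<infinity>) \<ge> c \<or> (\<exists>k\<in>K. v k < m \<and> cdfg w K v (v k) \<ge> c))"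
proof
  assume "Inf {t. cdfg w K v t \<ge> c} < m"
  then obtain t where t: "cdfg w K v t \<ge> c" "t < m" by (auto simp: Inf_less_iff)
  show "cdfg w K v (-\<infinity>) \<ge> c \<or> (\<exists>k\<in>K. v k < m \<and> cdfg w K v (v k) \<ge> c)"
  proof (cases "{k\<in>K. v k \<le> t} = {}")
    case True
    have "cdfg w K v t \<le> cdfg w K v (-\<infinity>)"
      by (rule cdfg_mono_gen[OF w]) (use True in auto)
    then show ?thesis using t by auto
  next
    case False
    have finB: "finite {k\<in>K. v k \<le> t}" using fin by auto
    have "Max (v ` {k\<in>K. v k \<le> t}) \<in> v ` {k\<in>K. v k \<le> t}" using False finB by (intro Max_in) auto
    then obtain k where k: "k \<in> K" "v k \<le> t" "v k = Max (v ` {k\<in>K. v k \<le> t})" by auto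
    have "cdfg w K v t \<le> cdfg w K v (v k)"
      by (rule cdfg_mono_gen[OF w]) (use finB k in auto)
    then show ?thesis using t k by (intro disjI2 bexI[of _ k]) auto
  qed
next
  assume "cdfg w K v (-\<infinity>) \<ge> c \<or> (\<exists>k\<in>K. v k < m \<and> cdfg w K v (v k) \<ge> c)"
  then show "Inf {t. cdfg w K v t \<ge> c} < m"
  proof
    assume "cdfg w K v (-\<infinity>) \<ge> c"
    then have "Inf {t. cdfg w K v t \<ge> c} \<le> -\<infinity>" by (intro Inf_lower) auto
    then show ?thesis using m by auto
  next
    assume "\<exists>k\<in>K. v k < m \<and> cdfg w K v (v k) \<ge> c"
    then obtain k where "v k < m" "cdfg w K v (v k) \<ge> c" by auto
    then have "Inf {t. cdfg w K v t \<ge> c} \<le> v k" by (intro Inf_lower) auto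
    then show ?thesis using \<open>v k < m\<close> by auto
  qed
qed



definition W :: "(nat \<Rightarrow> 'x) \<Rightarrow> (nat \<Rightarrow> bool) \<Rightarrow> nat set \<Rightarrow> nat \<times> nat \<Rightarrow> real" where
  "W x a J p = (if fst p = snd p then piw1 x a J (fst p) else piw2 x a J (fst p) (snd p))"

definition V :: "(nat \<Rightarrow> ereal) \<Rightarrow> nat \<times> nat \<Rightarrow> ereal" where
  "V \<sigma> p = min (\<sigma> (fst p)) (\<sigma> (snd p))"

lemma sum_JJ_split:
  fixes h :: "nat \<times> nat \<Rightarrow> real"
  assumes "finite J"
  shows "(\<Sum>p\<in>J\<times>J. h p) = (\<Sum>i\<in>J. h (i,i)) + (\<Sum>i\<in>J. \<Sum>j\<in>J-{i}. h (i,j))"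
proof -
  have "(\<Sum>p\<in>J\<times>J. h p) = (\<Sum>i\<in>J. \<Sum>j\<in>J. h (i,j))"
    by (simp add: sum.cartesian_product)
  also have "\<dots> = (\<Sum>i\<in>J. h (i,i) + (\<Sum>j\<in>J-{i}. h (i,j)))"
    by (rule sum.cong[OF refl]) (use assms in \<open>simp add: sum.remove\<close>)
  finally show ?thesis by (simp add: sum.distrib)
qed

lemma Pi_cdf_cdfg:
  assumes "finite J"
  shows "Pi_cdf s x a y J t = cdfg (W x a J) (J\<times>J) (V (sbar s x a y)) t"
  unfolding cdfg_def Pi_cdf_def
  by (subst sum_JJ_split[OF assms]) (auto simp: W_def V_def intro!: sum.cong)

lemma nat_sq_minus_nonneg: "0 \<le> real c * (real c - 1)"
  by (cases c) auto

lemma W_nonneg: "W x a J p \<ge> 0"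
proof -
  have "0 \<le> r * (r - 1) / (N\<^sup>2 * q * (q - 1))" if "r = real c" "q = real d" for r q N :: real and c d
    using nat_sq_minus_nonneg[of c] nat_sq_minus_nonneg[of d] that
    by (simp add: mult.assoc divide_nonneg_nonneg)
  then show ?thesis
    unfolding W_def piw1_def piw2_def Let_def
    by (auto intro!: divide_nonneg_nonneg mult_nonneg_nonneg)
qed

lemma card_offsq:
  assumes "finite C"
  shows "real (card (Sigma C (\<lambda>k. C - {k}))) = real (card C) * (real (card C) - 1)"
proof -
  have "card (Sigma C (\<lambda>k. C - {k})) = (\<Sum>k\<in>C. card (C - {k}))"
    using assms by (simp add: card_SigmaI)
  also have "\<dots> = (\<Sum>k\<in>C. card C - 1)"
    by (rule sum.cong) (use assms in auto)
  finally have "card (Sigma C (\<lambda>k. C - {k})) = card C * (card C - 1)" by simp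
  then show ?thesis by (cases "card C") (auto simp: algebra_simps)
qed

lemma W_sum:
  fixes g :: "nat \<times> nat \<Rightarrow> real"
  assumes fin: "finite J" and N: "zeros a J \<noteq> {}"
   and g1: "\<And>i i'. i\<in>J \<Longrightarrow> i'\<in>J \<Longrightarrow> x i = x i' \<Longrightarrow> g (i,i) = g (i',i')"
   and g2: "\<And>i j i' j'. i\<in>J \<Longrightarrow> j\<in>J \<Longrightarrow> i'\<in>J \<Longrightarrow> j'\<in>J \<Longrightarrow> i\<noteq>j \<Longrightarrow> i'\<noteq>j'
            \<Longrightarrow> x i = x i' \<Longrightarrow> x j = x j' \<Longrightarrow> g (i,j) = g (i',j')"
  shows "(\<Sum>p\<in>J\<times>J. W x a J p * g p) = (\<Sum>p\<in>zeros a J \<times> zeros a J. g p) / (real (card (zeros a J)))\<^sup>2"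
proof -
  define Z where "Z = zeros a J"
  define N where "N = real (card Z)"
  have ZJ: "Z \<subseteq> J" unfolding Z_def zeros_def by auto
  have finZ: "finite Z" using fin ZJ finite_subset by blast
  have Npos: "N > 0" using N finZ unfolding N_def Z_def by (auto simp: card_gt_0_iff)
  have clsZ: "cls x J i \<inter> zeros a J = {k\<in>Z. x k = x i}" for i
    unfolding cls_def Z_def zeros_def by auto
  have clsJ: "cls x J i = {k\<in>J. x k = x i}" for i unfolding cls_def by auto
  have D: "(\<Sum>i\<in>J. piw1 x a J i * g (i,i)) = (\<Sum>i\<in>Z. g (i,i)) / N\<^sup>2"
  proof -
    have "(\<Sum>i\<in>J. piw1 x a J i * g (i,i))
        = (\<Sum>i\<in>J. real (card {k\<in>Z. x k = x i}) / real (card {k\<in>J. x k = x i}) * g (i,i)) / N\<^sup>2"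
      unfolding piw1_def sum_divide_distrib
      apply (rule sum.cong[OF refl])
      apply (subst clsZ)
      apply (simp add: clsJ N_def Z_def)
      done
    also have "\<dots> = (\<Sum>i\<in>Z. g (i,i)) / N\<^sup>2"
    proof -
      have "(\<Sum>i\<in>J. real (card {k\<in>Z. x k = x i}) / real (card {k\<in>J. x k = x i}) * g (i,i)) = (\<Sum>i\<in>Z. g (i,i))"
        by (rule type_sum[OF fin ZJ]) (rule g1)
      then show ?thesis by simp
    qed
    finally show ?thesis .
  qed
  define OJ where "OJ = Sigma J (\<lambda>i. J - {i})"
  define OZ where "OZ = Sigma Z (\<lambda>i. Z - {i})"
  define \<tau> where "\<tau> p = (x (fst p), x (snd p))" for p
  have finOJ: "finite OJ" unfolding OJ_def using fin by auto
  have OZJ: "OZ \<subseteq> OJ" unfolding OZ_def OJ_def using ZJ by auto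
  have pw: "piw2 x a J i j = real (card {q\<in>OZ. \<tau> q = \<tau> (i,j)}) / real (card {q\<in>OJ. \<tau> q = \<tau> (i,j)}) / N\<^sup>2"
    if "(i,j) \<in> OJ" for i j
  proof (cases "x i = x j")
    case True
    have e1: "{q\<in>OJ. \<tau> q = \<tau> (i,j)} = Sigma (cls x J i) (\<lambda>k. cls x J i - {k})"
      unfolding OJ_def \<tau>_def cls_def using True by auto
    have e2: "{q\<in>OZ. \<tau> q = \<tau> (i,j)} = Sigma (cls x J i \<inter> zeros a J) (\<lambda>k. (cls x J i \<inter> zeros a J) - {k})"
      unfolding OZ_def \<tau>_def clsZ using True by auto
    have f1: "finite (cls x J i)" unfolding cls_def using fin by auto
    have f2: "finite (cls x J i \<inter> zeros a J)" using f1 by auto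
    show ?thesis unfolding e1 e2 card_offsq[OF f1] card_offsq[OF f2]
      unfolding piw2_def Let_def N_def Z_def using True by (simp add: divide_divide_eq_left mult_ac)
  next
    case False
    have e1: "{q\<in>OJ. \<tau> q = \<tau> (i,j)} = cls x J i \<times> cls x J j"
      unfolding OJ_def \<tau>_def cls_def using False by auto
    have e2: "{q\<in>OZ. \<tau> q = \<tau> (i,j)} = (cls x J i \<inter> zeros a J) \<times> (cls x J j \<inter> zeros a J)"
      unfolding OZ_def \<tau>_def clsZ using False by auto
    show ?thesis unfolding e1 e2 card_cartesian_product
      unfolding piw2_def Let_def N_def Z_def using False by (simp add: divide_divide_eq_left mult_ac)
  qed
  have O: "(\<Sum>i\<in>J. \<Sum>j\<in>J-{i}. piw2 x a J i j * g (i,j)) = (\<Sum>p\<in>OZ. g p) / N\<^sup>2"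
  proof -
    have "(\<Sum>i\<in>J. \<Sum>j\<in>J-{i}. piw2 x a J i j * g (i,j)) = (\<Sum>p\<in>OJ. piw2 x a J (fst p) (snd p) * g p)"
      unfolding OJ_def using fin by (subst sum.Sigma) (auto simp: split_beta)
    also have "\<dots> = (\<Sum>p\<in>OJ. real (card {q\<in>OZ. \<tau> q = \<tau> p}) / real (card {q\<in>OJ. \<tau> q = \<tau> p}) * g p) / N\<^sup>2"
      unfolding sum_divide_distrib
    proof (rule sum.cong[OF refl])
      fix p assume "p \<in> OJ"
      then obtain i j where p: "p = (i,j)" "(i,j) \<in> OJ" by (cases p) auto
      show "piw2 x a J (fst p) (snd p) * g p = real (card {q\<in>OZ. \<tau> q = \<tau> p}) / real (card {q\<in>OJ. \<tau> q = \<tau> p}) * g p / N\<^sup>2"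
        unfolding p(1) using pw[OF p(2)] by simp
    qed
    also have "\<dots> = (\<Sum>p\<in>OZ. g p) / N\<^sup>2"
    proof -
      have "(\<Sum>p\<in>OJ. real (card {q\<in>OZ. \<tau> q = \<tau> p}) / real (card {q\<in>OJ. \<tau> q = \<tau> p}) * g p) = (\<Sum>p\<in>OZ. g p)"
      proof (rule type_sum[OF finOJ OZJ])
        fix b b' assume "b \<in> OJ" "b' \<in> OJ" "\<tau> b = \<tau> b'"
        then show "g b = g b'"
          by (cases b; cases b') (simp add: OJ_def \<tau>_def g2)
      qed
      then show ?thesis by simp
    qed
    finally show ?thesis .
  qed
  have "(\<Sum>p\<in>J\<times>J. W x a J p * g p) = (\<Sum>i\<in>J. piw1 x a J i * g (i,i)) + (\<Sum>i\<in>J. \<Sum>j\<in>J-{i}. piw2 x a J i j * g (i,j))"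
    by (subst sum_JJ_split[OF fin]) (auto simp: W_def intro!: sum.cong)
  also have "\<dots> = ((\<Sum>i\<in>Z. g (i,i)) + (\<Sum>p\<in>OZ. g p)) / N\<^sup>2" unfolding D O by (simp add: add_divide_distrib)
  also have "(\<Sum>i\<in>Z. g (i,i)) + (\<Sum>p\<in>OZ. g p) = (\<Sum>p\<in>Z\<times>Z. g p)"
    unfolding OZ_def using finZ by (subst sum_JJ_split[OF finZ]) (simp add: sum.Sigma)
  finally show ?thesis unfolding Z_def N_def .
qed

lemma W_total:
  assumes fin: "finite J" and N: "zeros a J \<noteq> {}"
  shows "(\<Sum>p\<in>J\<times>J. W x a J p) = 1"
proof -
  have "(\<Sum>p\<in>J\<times>J. W x a J p * 1) = (\<Sum>p\<in>zeros a J \<times> zeros a J. 1) / (real (card (zeros a J)))\<^sup>2"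
    by (rule W_sum[OF fin N]) auto
  moreover have "finite (zeros a J)" using fin unfolding zeros_def by auto
  ultimately show ?thesis using N by (simp add: card_cartesian_product power2_eq_square)
qed



lemma cdfg_meas:
  assumes fin: "finite K"
    and vv: "\<And>k. k \<in> K \<Longrightarrow> (\<lambda>\<omega>. vv k \<omega>) \<in> borel_measurable M"
    and f: "f \<in> borel_measurable M"
  shows "(\<lambda>\<omega>. cdfg w K (\<lambda>k. vv k \<omega>) (f \<omega>)) \<in> borel_measurable M"
  unfolding cdfg_def
proof (rule borel_measurable_sum)
  fix k assume "k \<in> K"
  note [measurable] = vv[OF this] f
  show "(\<lambda>\<omega>. w k * (if vv k \<omega> \<le> f \<omega> then 1 else 0)) \<in> borel_measurable M"
    by measurable
qed

lemma quant_less_meas: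
  assumes fin: "finite K" and w: "\<forall>k\<in>K. w k \<ge> 0"
    and vv: "\<And>k. k \<in> K \<Longrightarrow> (\<lambda>\<omega>. vv k \<omega>) \<in> borel_measurable M"
    and m: "m \<in> borel_measurable M" and mi: "\<And>\<omega>. -\<infinity> < m \<omega>"
  shows "{\<omega> \<in> space M. Inf {t. cdfg w K (\<lambda>k. vv k \<omega>) t \<ge> c} < m \<omega>} \<in> sets M"
proof -
  have eq: "{\<omega> \<in> space M. Inf {t. cdfg w K (\<lambda>k. vv k \<omega>) t \<ge> c} < m \<omega>}
    = {\<omega> \<in> space M. cdfg w K (\<lambda>k. vv k \<omega>) (-\<infinity>) \<ge> c} \<union>
      (\<Union>k\<in>K. {\<omega> \<in> space M. vv k \<omega> < m \<omega> \<and> cdfg w K (\<lambda>k. vv k \<omega>) (vv k \<omega>) \<ge> c})"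
    using cdfg_quant_less[OF fin w mi] by blast
  have m1: "(\<lambda>\<omega>. cdfg w K (\<lambda>k. vv k \<omega>) (-\<infinity>)) \<in> borel_measurable M"
    by (rule cdfg_meas[OF fin vv]) auto
  have m2: "(\<lambda>\<omega>. cdfg w K (\<lambda>k. vv k \<omega>) (vv k \<omega>)) \<in> borel_measurable M" if "k \<in> K" for k
    by (rule cdfg_meas[OF fin vv vv[OF that]])
  show ?thesis unfolding eq
  proof (intro sets.Un sets.finite_UN[OF fin] ballI)
    show "{\<omega> \<in> space M. cdfg w K (\<lambda>k. vv k \<omega>) (-\<infinity>) \<ge> c} \<in> sets M"
      using m1 by measurable
    fix k assume k: "k \<in> K"
    note [measurable] = m2[OF k] vv[OF k] m
    show "{\<omega> \<in> space M. vv k \<omega> < m \<omega> \<and> cdfg w K (\<lambda>k. vv k \<omega>) (vv k \<omega>) \<ge> c} \<in> sets M"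
      by measurable
  qed
qed



definition sw :: "nat \<Rightarrow> nat \<Rightarrow> nat \<Rightarrow> nat" where
  "sw u v k = (if k = u then v else if k = v then u else k)"

lemma sw_sw[simp]: "sw u v (sw u v k) = k" by (auto simp: sw_def)
lemma sw_bij: "u \<in> A \<Longrightarrow> v \<in> A \<Longrightarrow> bij_betw (sw u v) A A"
  by (rule bij_betwI[where g="sw u v"]) (auto simp: sw_def)
lemma sw_x: "x u = x v \<Longrightarrow> x (sw u v k) = x k" by (auto simp: sw_def)
lemma sw_in: "u \<in> A \<Longrightarrow> v \<in> A \<Longrightarrow> k \<in> A \<Longrightarrow> sw u v k \<in> A" by (auto simp: sw_def)

lemma cls_eq: "x i' = x i \<Longrightarrow> cls x J i' = cls x J i" by (simp add: cls_def)

lemma W_perm: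
  assumes b: "bij_betw \<sigma> J J" and xs: "\<forall>i\<in>J. x (\<sigma> i) = x i" and i: "i \<in> J" and j: "j \<in> J"
  shows "W x a J (\<sigma> i, \<sigma> j) = W x a J (i,j)"
proof -
  have inj: "\<sigma> i = \<sigma> j \<longleftrightarrow> i = j" using b i j by (auto simp: bij_betw_def inj_on_def)
  have c1: "cls x J (\<sigma> i) = cls x J i" "cls x J (\<sigma> j) = cls x J j"
    using xs i j by (simp_all add: cls_def)
  show ?thesis unfolding W_def piw1_def piw2_def Let_def using inj c1 xs i j by simp
qed

lemma cdfg_perm:
  assumes b: "bij_betw \<sigma> J J" and xs: "\<forall>i\<in>J. x (\<sigma> i) = x i"
  shows "cdfg (W x a J) (J\<times>J) (\<lambda>p. v (map_prod \<sigma> \<sigma> p)) t = cdfg (W x a J) (J\<times>J) v t"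
proof -
  have bb: "bij_betw (map_prod \<sigma> \<sigma>) (J\<times>J) (J\<times>J)" by (rule bij_betw_map_prod[OF b b])
  have "cdfg (W x a J) (J\<times>J) (\<lambda>p. v (map_prod \<sigma> \<sigma> p)) t
      = (\<Sum>p\<in>J\<times>J. W x a J (map_prod \<sigma> \<sigma> p) * (if v (map_prod \<sigma> \<sigma> p) \<le> t then 1 else 0))"
    unfolding cdfg_def by (rule sum.cong[OF refl]) (auto simp: W_perm[OF b xs])
  also have "\<dots> = cdfg (W x a J) (J\<times>J) v t"
    unfolding cdfg_def by (rule sum.reindex_bij_betw[OF bb])
  finally show ?thesis .
qed



lemma cdfg_mono_v:
  assumes "\<forall>k\<in>K. w k \<ge> 0" "\<forall>k\<in>K. v1 k \<le> v2 k"
  shows "cdfg w K v2 t \<le> cdfg w K v1 t"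
  unfolding cdfg_def by (rule sum_mono) (use assms order_trans in fastforce)

lemma sum_sq_prod:
  fixes f :: "'a \<Rightarrow> real"
  shows "(\<Sum>i\<in>A. f i)\<^sup>2 = (\<Sum>p\<in>A\<times>A. f (fst p) * f (snd p))"
  by (simp add: power2_eq_square sum_product sum.cartesian_product split_beta)

lemma core:
  fixes P :: "(nat \<Rightarrow> 'y) measure" and Ysp :: "'y measure" and s :: "'x \<Rightarrow> 'y \<Rightarrow> real"
    and x :: "nat \<Rightarrow> 'x" and a :: "nat \<Rightarrow> bool" and J :: "nat set" and \<beta> :: real
  assumes P: "prob_space P" and sP: "sets P = sets (PiM {..<n} (\<lambda>_. Ysp))"
    and s_meas: "\<forall>xv. (\<lambda>yv. s xv yv) \<in> borel_measurable Ysp"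
    and exch: "\<And>\<sigma>. bij_betw \<sigma> {..<n} {..<n} \<Longrightarrow> (\<forall>i<n. x (\<sigma> i) = x i) \<Longrightarrow>
        distr P (PiM {..<n} (\<lambda>_. Ysp)) (\<lambda>y. restrict (\<lambda>i. y (\<sigma> i)) {..<n}) = P"
    and J: "J \<subseteq> {..<n}" and Z: "zeros a J \<noteq> {}"
  shows "(\<integral>y. (\<Sum>i\<in>zeros a J. if y i \<notin> C2 s x a y J \<beta> (x i) then 1 else 0)\<^sup>2 \<partial>P)
           \<le> (real (card (zeros a J)))\<^sup>2 * \<beta>\<^sup>2"
proof -
  interpret prob_space P by (rule P)
  define PI where "PI = PiM {..<n} (\<lambda>_. Ysp)"
  have spP: "space P = space PI" unfolding PI_def using sP by (rule sets_eq_imp_space_eq)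
  have mP: "measurable P N = measurable PI N" for N :: "'b measure"
    unfolding PI_def by (rule measurable_cong_sets[OF sP refl])
  have finJ: "finite J" using J finite_subset by blast
  define K where "K = J \<times> J"
  have finK: "finite K" unfolding K_def using finJ by auto
  define Zs where "Zs = zeros a J"
  have ZJ: "Zs \<subseteq> J" unfolding Zs_def zeros_def by auto
  have finZ: "finite Zs" using finJ ZJ finite_subset by blast
  define Sc where "Sc y = (\<lambda>i. ereal (s (x i) (y i)))" for y :: "nat \<Rightarrow> 'y"
  define c where "c = 1 - \<beta>\<^sup>2"
  define Fs where "Fs y = cdfg (W x a J) K (V (Sc y))" for y
  define Qs where "Qs y = Inf {t. Fs y t \<ge> c}" for y
  define Q where "Q y = Inf {t. cdfg (W x a J) K (V (sbar s x a y)) t \<ge> c}" for y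
  define E where "E p = {y \<in> space P. Qs y < V (Sc y) p}" for p
  define h where "h p = measure P (E p)" for p
  define Miss where "Miss i = {y \<in> space P. Q y < Sc y i}" for i
  have Wnn: "\<forall>k\<in>K. W x a J k \<ge> 0" using W_nonneg by blast
  have ScM: "(\<lambda>y. Sc y i) \<in> borel_measurable P" if "i \<in> J" for i
  proof -
    have i: "i \<in> {..<n}" using that J by auto
    have "(\<lambda>y. y i) \<in> measurable PI Ysp" unfolding PI_def by (rule measurable_component_singleton[OF i])
    then have "(\<lambda>y. s (x i) (y i)) \<in> borel_measurable PI" using s_meas measurable_compose by blast
    then show ?thesis unfolding Sc_def mP by measurable
  qed
  have sbM: "(\<lambda>y. sbar s x a y i) \<in> borel_measurable P" if "i \<in> J" for i
  proof -
    have "(\<lambda>y. sbar s x a y i) = (\<lambda>y. if a i then Sc y i else \<infinity>)"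
      unfolding sbar_def Sc_def by auto
    then show ?thesis using ScM[OF that] by simp
  qed
  have VM: "(\<lambda>y. V (Sc y) k) \<in> borel_measurable P" if "k \<in> K" for k
    using that ScM unfolding V_def K_def by (cases k) (auto intro!: borel_measurable_min)
  have VsM: "(\<lambda>y. V (sbar s x a y) k) \<in> borel_measurable P" if "k \<in> K" for k
    using that sbM unfolding V_def K_def by (cases k) (auto intro!: borel_measurable_min)
  have Vfin: "-\<infinity> < V (Sc y) k" for y k unfolding V_def Sc_def by (simp add: min_def)
  have EM: "E p \<in> sets P" if "p \<in> K" for p
    unfolding E_def Qs_def Fs_def
    using quant_less_meas[OF finK Wnn, where vv="\<lambda>k y. V (Sc y) k" and M=P and m="\<lambda>y. V (Sc y) p" and c=c]
      VM VM[OF that] Vfin by simp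
  have MissM: "Miss i \<in> sets P" if "i \<in> J" for i
    unfolding Miss_def Q_def
    using quant_less_meas[OF finK Wnn, where vv="\<lambda>k y. V (sbar s x a y) k" and M=P and m="\<lambda>y. Sc y i" and c=c]
      VsM ScM[OF that] by (simp add: Sc_def)
  have inv: "h (sw u v i, sw u v j) = h (i,j)"
    if uv: "u \<in> J" "v \<in> J" "x u = x v" and ij: "i \<in> J" "j \<in> J" for u v i j
  proof -
    define \<sigma> where "\<sigma> = sw u v"
    have un: "u \<in> {..<n}" "v \<in> {..<n}" using uv J by auto
    have b: "bij_betw \<sigma> {..<n} {..<n}" unfolding \<sigma>_def by (rule sw_bij[OF un])
    have bJ: "bij_betw \<sigma> J J" unfolding \<sigma>_def by (rule sw_bij[OF uv(1,2)])
    have xs: "x (\<sigma> k) = x k" for k unfolding \<sigma>_def by (rule sw_x[OF uv(3)])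
    have \<sigma>n: "\<sigma> k \<in> {..<n}" if "k \<in> {..<n}" for k unfolding \<sigma>_def by (rule sw_in[OF un that])
    define R where "R y = restrict (\<lambda>i. y (\<sigma> i)) {..<n}" for y :: "nat \<Rightarrow> 'y"
    have RM: "R \<in> measurable P PI" unfolding mP R_def PI_def
      by (rule measurable_restrict) (rule measurable_component_singleton[OF \<sigma>n])
    have dR: "distr P PI R = P" unfolding R_def PI_def by (rule exch[OF b]) (simp add: xs)
    have ScR: "Sc (R y) k = Sc y (\<sigma> k)" if "k \<in> J" for y k
      using that J xs[of k] unfolding Sc_def R_def by auto
    have VR: "V (Sc (R y)) p = V (Sc y) (map_prod \<sigma> \<sigma> p)" if "p \<in> K" for y p
      using that ScR unfolding V_def K_def by (cases p) auto
    have FR: "Fs (R y) t = Fs y t" for y t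
    proof -
      have "Fs (R y) t = cdfg (W x a J) (J\<times>J) (\<lambda>p. V (Sc y) (map_prod \<sigma> \<sigma> p)) t"
        unfolding Fs_def cdfg_def K_def by (rule sum.cong[OF refl]) (simp add: VR[unfolded K_def])
      also have "\<dots> = Fs y t" unfolding Fs_def K_def by (rule cdfg_perm[OF bJ]) (simp add: xs)
      finally show ?thesis .
    qed
    have QR: "Qs (R y) = Qs y" for y unfolding Qs_def FR ..
    have pK: "(i,j) \<in> K" using ij unfolding K_def by auto
    have ESP: "E (i,j) \<in> sets PI" using EM[OF pK] sP unfolding PI_def by simp
    have pre: "R -` E (i,j) \<inter> space P = E (\<sigma> i, \<sigma> j)"
    proof -
      have Rsp: "R y \<in> space P" if "y \<in> space P" for y using measurable_space[OF RM that] spP by simp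
      show ?thesis
      proof (rule set_eqI)
        fix y
        show "y \<in> R -` E (i,j) \<inter> space P \<longleftrightarrow> y \<in> E (\<sigma> i, \<sigma> j)"
        proof (cases "y \<in> space P")
          case True
          have "Qs (R y) < V (Sc (R y)) (i,j) \<longleftrightarrow> Qs y < V (Sc y) (\<sigma> i, \<sigma> j)"
            by (simp only: QR VR[OF pK] map_prod_simp)
          then show ?thesis using True Rsp[OF True] unfolding E_def by simp
        next
          case False
          then show ?thesis unfolding E_def by simp
        qed
      qed
    qed
    have "h (i,j) = measure (distr P PI R) (E (i,j))" unfolding h_def dR ..
    also have "\<dots> = measure P (R -` E (i,j) \<inter> space P)" by (rule measure_distr[OF RM ESP])
    also have "\<dots> = h (\<sigma> i, \<sigma> j)" unfolding pre h_def ..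
    finally have "h (i,j) = h (\<sigma> i, \<sigma> j)" .
    then show ?thesis unfolding \<sigma>_def by (rule sym)
  qed
  have g1: "h (i,i) = h (i',i')" if "i \<in> J" "i' \<in> J" "x i = x i'" for i i'
    using inv[OF that(1,2,3) that(1) that(1)] by (simp add: sw_def)
  have g2: "h (i,j) = h (i',j')" if "i\<in>J" "j\<in>J" "i'\<in>J" "j'\<in>J" "i\<noteq>j" "i'\<noteq>j'"
    "x i = x i'" "x j = x j'" for i j i' j'
  proof -
    define j2 where "j2 = sw i i' j"
    have j2J: "j2 \<in> J" unfolding j2_def using that by (auto simp: sw_def)
    have xj2: "x j2 = x j'" unfolding j2_def using sw_x[of x i i' j] that by simp
    have j2i': "j2 \<noteq> i'" unfolding j2_def sw_def using that by auto
    have "h (i,j) = h (i', j2)" using inv[of i i' i j] that unfolding j2_def by (simp add: sw_def)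
    also have "\<dots> = h (sw j2 j' i', sw j2 j' j2)" using inv[of j2 j' i' j2] that j2J xj2 by simp
    also have "\<dots> = h (i', j')" using j2i' that by (simp add: sw_def)
    finally show ?thesis .
  qed
  have WS: "(\<Sum>p\<in>K. W x a J p * h p) = (\<Sum>p\<in>Zs\<times>Zs. h p) / (real (card Zs))\<^sup>2"
    unfolding K_def Zs_def
    apply (rule W_sum[OF finJ Z])
     apply (rule g1; assumption)
    apply (rule g2; assumption)
    done
  have EK: "measure P (E p) = (\<integral>y. indicator (E p) y \<partial>P)" for p
  proof -
    have "E p \<inter> space P = E p" unfolding E_def by auto
    then show ?thesis by simp
  qed
  have intE: "integrable P (indicator (E p) :: _ \<Rightarrow> real)" if "p \<in> K" for p
    using EM[OF that] by (intro integrable_real_indicator) (auto simp: less_top[symmetric])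
  have bound: "(\<Sum>p\<in>K. W x a J p * h p) \<le> \<beta>\<^sup>2"
  proof -
    have "(\<Sum>p\<in>K. W x a J p * h p) = (\<integral>y. (\<Sum>p\<in>K. W x a J p * indicator (E p) y) \<partial>P)"
      unfolding h_def EK using intE by (simp add: Bochner_Integration.integral_sum)
    also have "\<dots> \<le> \<beta>\<^sup>2"
    proof (rule integral_le_const)
      show "integrable P (\<lambda>y. \<Sum>p\<in>K. W x a J p * indicator (E p) y)"
      proof (rule Bochner_Integration.integrable_sum)
        fix p assume "p \<in> K"
        from intE[OF this] show "integrable P (\<lambda>y. W x a J p * indicator (E p) y)"
          by (rule integrable_mult_right)
      qed
      show "AE y in P. (\<Sum>p\<in>K. W x a J p * indicator (E p) y) \<le> \<beta>\<^sup>2"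
      proof (rule AE_I2)
        fix y assume y: "y \<in> space P"
        have tot: "(\<Sum>p\<in>K. W x a J p) = 1" unfolding K_def by (rule W_total[OF finJ Z])
        have ne: "{t. cdfg (W x a J) K (V (Sc y)) t \<ge> c} \<noteq> {}"
        proof -
          have "cdfg (W x a J) K (V (Sc y)) \<infinity> = 1" unfolding cdfg_def using tot by simp
          then have "\<infinity> \<in> {t. cdfg (W x a J) K (V (Sc y)) t \<ge> c}" unfolding c_def by simp
          then show ?thesis by blast
        qed
        have att: "Fs y (Qs y) \<ge> c" unfolding Fs_def Qs_def by (rule cdfg_attain[OF finK Wnn ne])
        have "(\<Sum>p\<in>K. W x a J p * indicator (E p) y)
            = (\<Sum>p\<in>K. W x a J p * (1 - (if V (Sc y) p \<le> Qs y then 1 else 0)))"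
          by (rule sum.cong[OF refl]) (use y in \<open>auto simp: E_def not_le\<close>)
        also have "\<dots> = (\<Sum>p\<in>K. W x a J p) - Fs y (Qs y)"
          unfolding Fs_def cdfg_def by (simp add: right_diff_distrib sum_subtractf)
        also have "\<dots> \<le> \<beta>\<^sup>2" using tot att unfolding c_def by simp
        finally show "(\<Sum>p\<in>K. W x a J p * indicator (E p) y) \<le> \<beta>\<^sup>2" .
      qed
    qed
    finally show ?thesis .
  qed
  have QsQ: "Qs y \<le> Q y" for y
  proof -
    have "{t. cdfg (W x a J) K (V (sbar s x a y)) t \<ge> c} \<subseteq> {t. Fs y t \<ge> c}"
    proof
      fix t assume "t \<in> {t. cdfg (W x a J) K (V (sbar s x a y)) t \<ge> c}"
      moreover have "cdfg (W x a J) K (V (sbar s x a y)) t \<le> Fs y t"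
        unfolding Fs_def
        by (rule cdfg_mono_v[OF Wnn]) (auto simp: V_def Sc_def sbar_def min_def)
      ultimately show "t \<in> {t. Fs y t \<ge> c}" by auto
    qed
    then show ?thesis unfolding Qs_def Q_def by (rule Inf_superset_mono)
  qed
  have ZK: "Zs \<times> Zs \<subseteq> K" unfolding K_def using ZJ by auto
  have pt: "(\<Sum>i\<in>zeros a J. if y i \<notin> C2 s x a y J \<beta> (x i) then 1 else 0)\<^sup>2
        \<le> (\<Sum>p\<in>Zs\<times>Zs. indicator (E p) y :: real)" if y: "y \<in> space P" for y
  proof -
    have qq: "quant (Pi_cdf s x a y J) (\<beta>\<^sup>2) = Q y"
      unfolding quant_def Q_def c_def K_def Pi_cdf_cdfg[OF finJ] ..
    have "(\<Sum>i\<in>zeros a J. if y i \<notin> C2 s x a y J \<beta> (x i) then 1 else 0)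
        = (\<Sum>i\<in>Zs. if Q y < Sc y i then 1 else (0::real))"
      unfolding Zs_def C2_def qq Sc_def by (simp add: not_le)
    also have "\<dots> \<le> (\<Sum>i\<in>Zs. if Qs y < Sc y i then 1 else (0::real))"
      by (rule sum_mono) (use QsQ[of y] in \<open>auto dest: le_less_trans\<close>)
    finally have le1: "(\<Sum>i\<in>zeros a J. if y i \<notin> C2 s x a y J \<beta> (x i) then 1 else 0)
        \<le> (\<Sum>i\<in>Zs. if Qs y < Sc y i then 1 else (0::real))" .
    have "(\<Sum>i\<in>zeros a J. if y i \<notin> C2 s x a y J \<beta> (x i) then 1 else 0)\<^sup>2
        \<le> (\<Sum>i\<in>Zs. if Qs y < Sc y i then 1 else (0::real))\<^sup>2"
      by (rule power_mono[OF le1]) (simp add: sum_nonneg)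
    also have "\<dots> = (\<Sum>p\<in>Zs\<times>Zs. (if Qs y < Sc y (fst p) then 1 else (0::real)) * (if Qs y < Sc y (snd p) then 1 else 0))"
      by (rule sum_sq_prod)
    also have "\<dots> = (\<Sum>p\<in>Zs\<times>Zs. indicator (E p) y)"
      by (rule sum.cong[OF refl]) (use y in \<open>auto simp: E_def V_def\<close>)
    finally show ?thesis .
  qed
  have "(\<integral>y. (\<Sum>i\<in>zeros a J. if y i \<notin> C2 s x a y J \<beta> (x i) then 1 else (0::real))\<^sup>2 \<partial>P)
      \<le> (\<integral>y. (\<Sum>p\<in>Zs\<times>Zs. indicator (E p) y) \<partial>P)"
  proof (rule Bochner_Integration.integral_mono')
    show "integrable P (\<lambda>y. \<Sum>p\<in>Zs\<times>Zs. indicator (E p) y :: real)"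
      using intE ZK by (intro Bochner_Integration.integrable_sum) auto
    show "\<And>y. y \<in> space P \<Longrightarrow> 0 \<le> (\<Sum>p\<in>Zs\<times>Zs. indicator (E p) y :: real)"
      by (simp add: sum_nonneg)
  qed (rule pt)
  also have "\<dots> = (\<Sum>p\<in>Zs\<times>Zs. h p)"
    unfolding h_def EK using intE ZK by (subst Bochner_Integration.integral_sum) auto
  also have "\<dots> = (real (card Zs))\<^sup>2 * (\<Sum>p\<in>K. W x a J p * h p)"
  proof -
    have "card Zs > 0" using Z finZ unfolding Zs_def by (auto simp: card_gt_0_iff)
    then show ?thesis unfolding WS by simp
  qed
  also have "\<dots> \<le> (real (card Zs))\<^sup>2 * \<beta>\<^sup>2"
    by (rule mult_left_mono[OF bound]) simp
  finally show ?thesis unfolding Zs_def .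
qed



lemma miss_meas:
  fixes Ysp :: "'y measure" and s :: "'x \<Rightarrow> 'y \<Rightarrow> real"
  assumes s_meas: "\<forall>xv. (\<lambda>yv. s xv yv) \<in> borel_measurable Ysp"
    and J: "J \<subseteq> {..<n}" and i: "i \<in> J"
  shows "(\<lambda>y. if y i \<notin> C2 s x a y J \<beta> (x i) then 1 else (0::real)) \<in> borel_measurable (PiM {..<n} (\<lambda>_. Ysp))"
proof -
  define PI where "PI = PiM {..<n} (\<lambda>_. Ysp)"
  have finJ: "finite J" using J finite_subset by blast
  define K where "K = J \<times> J"
  have finK: "finite K" unfolding K_def using finJ by auto
  define Sc where "Sc y = (\<lambda>i. ereal (s (x i) (y i)))" for y :: "nat \<Rightarrow> 'y"
  define c where "c = 1 - \<beta>\<^sup>2"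
  define Q where "Q y = Inf {t. cdfg (W x a J) K (V (sbar s x a y)) t \<ge> c}" for y
  have Wnn: "\<forall>k\<in>K. W x a J k \<ge> 0" using W_nonneg by blast
  have ScM: "(\<lambda>y. Sc y i) \<in> borel_measurable PI" if "i \<in> J" for i
  proof -
    have i: "i \<in> {..<n}" using that J by auto
    have "(\<lambda>y. y i) \<in> measurable PI Ysp" unfolding PI_def by (rule measurable_component_singleton[OF i])
    then have "(\<lambda>y. s (x i) (y i)) \<in> borel_measurable PI" using s_meas measurable_compose by blast
    then show ?thesis unfolding Sc_def by measurable
  qed
  have sbM: "(\<lambda>y. sbar s x a y i) \<in> borel_measurable PI" if "i \<in> J" for i
  proof -
    have "(\<lambda>y. sbar s x a y i) = (\<lambda>y. if a i then Sc y i else \<infinity>)"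
      unfolding sbar_def Sc_def by auto
    then show ?thesis using ScM[OF that] by simp
  qed
  have VsM: "(\<lambda>y. V (sbar s x a y) k) \<in> borel_measurable PI" if "k \<in> K" for k
    using that sbM unfolding V_def K_def by (cases k) (auto intro!: borel_measurable_min)
  have MissM: "{y \<in> space PI. Q y < Sc y i} \<in> sets PI"
    unfolding Q_def
    using quant_less_meas[OF finK Wnn, where vv="\<lambda>k y. V (sbar s x a y) k" and M=PI and m="\<lambda>y. Sc y i" and c=c]
      VsM ScM[OF i] by (simp add: Sc_def)
  have eq: "(if y i \<notin> C2 s x a y J \<beta> (x i) then 1 else (0::real)) = indicator {y \<in> space PI. Q y < Sc y i} y"
    if "y \<in> space PI" for y
  proof -
    have qq: "quant (Pi_cdf s x a y J) (\<beta>\<^sup>2) = Q y"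
      unfolding quant_def Q_def c_def K_def Pi_cdf_cdfg[OF finJ] ..
    show ?thesis using that unfolding C2_def qq Sc_def by (auto simp: not_le)
  qed
  have "(\<lambda>y. indicator {y \<in> space PI. Q y < Sc y i} y :: real) \<in> borel_measurable PI"
    using MissM by (rule borel_measurable_indicator)
  then show ?thesis unfolding PI_def[symmetric] by (rule measurable_cong[THEN iffD1, rotated]) (simp add: eq)
qed

lemma indep_int:
  fixes M :: "'a measure" and PI :: "'b measure" and \<psi> :: "'b \<Rightarrow> real"
  assumes P: "prob_space M" and Yr: "Yr \<in> measurable M PI"
    and G: "{\<omega> \<in> space M. G \<omega>} \<in> sets M"
    and ind: "\<forall>B\<in>sets PI. measure M {\<omega> \<in> space M. G \<omega> \<and> Yr \<omega> \<in> B}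
        = measure M {\<omega> \<in> space M. G \<omega>} * measure M {\<omega> \<in> space M. Yr \<omega> \<in> B}"
    and psi: "\<psi> \<in> borel_measurable PI" and fin: "finite (\<psi> ` space PI)"
  shows "(\<integral>\<omega>. (if G \<omega> then \<psi> (Yr \<omega>) else 0) \<partial>M)
       = measure M {\<omega> \<in> space M. G \<omega>} * (\<integral>\<omega>. \<psi> (Yr \<omega>) \<partial>M)"
proof -
  interpret prob_space M by (rule P)
  define R where "R = \<psi> ` space PI"
  define C where "C v = \<psi> -` {v} \<inter> space PI" for v
  have CS: "C v \<in> sets PI" for v unfolding C_def using psi by (rule measurable_sets) simp
  define A where "A v = {\<omega> \<in> space M. G \<omega> \<and> Yr \<omega> \<in> C v}" for v
  define B where "B v = {\<omega> \<in> space M. Yr \<omega> \<in> C v}" for v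
  have BS: "B v \<in> sets M" for v unfolding B_def using measurable_sets[OF Yr CS] by (simp add: vimage_def Int_def conj_commute)
  have AS: "A v \<in> sets M" for v
  proof -
    have "A v = {\<omega> \<in> space M. G \<omega>} \<inter> B v" unfolding A_def B_def by auto
    then show ?thesis using G BS by auto
  qed
  have Ysp: "Yr \<omega> \<in> space PI" if "\<omega> \<in> space M" for \<omega> using measurable_space[OF Yr that] .
  have dec: "\<psi> (Yr \<omega>) = (\<Sum>v\<in>R. v * indicator (B v) \<omega>)" if "\<omega> \<in> space M" for \<omega>
  proof -
    have "(\<Sum>v\<in>R. v * indicator (B v) \<omega>) = (\<Sum>v\<in>R. if \<psi> (Yr \<omega>) = v then v else 0)"
      by (rule sum.cong[OF refl]) (use that Ysp[OF that] in \<open>auto simp: B_def C_def\<close>)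
    also have "\<dots> = \<psi> (Yr \<omega>)" using Ysp[OF that] unfolding R_def using fin by (simp add: sum.delta')
    finally show ?thesis by simp
  qed
  have decG: "(if G \<omega> then \<psi> (Yr \<omega>) else 0) = (\<Sum>v\<in>R. v * indicator (A v) \<omega>)" if "\<omega> \<in> space M" for \<omega>
  proof -
    have "(\<Sum>v\<in>R. v * indicator (A v) \<omega>) = (\<Sum>v\<in>R. if G \<omega> then v * indicator (B v) \<omega> else 0)"
      by (rule sum.cong[OF refl]) (use that in \<open>auto simp: A_def B_def indicator_def\<close>)
    also have "\<dots> = (if G \<omega> then \<psi> (Yr \<omega>) else 0)" using dec[OF that] by simp
    finally show ?thesis by simp
  qed
  have intA: "integrable M (\<lambda>\<omega>. v * indicator (A v) \<omega> :: real)" for v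
    using AS by (intro integrable_mult_right integrable_real_indicator) (auto simp: less_top[symmetric])
  have intB: "integrable M (\<lambda>\<omega>. v * indicator (B v) \<omega> :: real)" for v
    using BS by (intro integrable_mult_right integrable_real_indicator) (auto simp: less_top[symmetric])
  have AB: "measure M (A v) = measure M {\<omega> \<in> space M. G \<omega>} * measure M (B v)" for v
    unfolding A_def B_def using ind CS by blast
  have "(\<integral>\<omega>. (if G \<omega> then \<psi> (Yr \<omega>) else 0) \<partial>M) = (\<integral>\<omega>. (\<Sum>v\<in>R. v * indicator (A v) \<omega>) \<partial>M)"
    by (rule Bochner_Integration.integral_cong[OF refl]) (rule decG)
  also have "\<dots> = (\<Sum>v\<in>R. v * measure M (A v))"
    using intA AS by (simp add: Bochner_Integration.integral_sum sets.Int_space_eq2)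
  also have "\<dots> = measure M {\<omega> \<in> space M. G \<omega>} * (\<Sum>v\<in>R. v * measure M (B v))"
    unfolding AB by (simp add: sum_distrib_left sum_distrib_right mult_ac)
  also have "(\<Sum>v\<in>R. v * measure M (B v)) = (\<integral>\<omega>. (\<Sum>v\<in>R. v * indicator (B v) \<omega>) \<partial>M)"
    using intB BS by (simp add: Bochner_Integration.integral_sum sets.Int_space_eq2)
  also have "\<dots> = (\<integral>\<omega>. \<psi> (Yr \<omega>) \<partial>M)"
    by (rule Bochner_Integration.integral_cong[OF refl]) (simp add: dec)
  finally show ?thesis .
qed



lemma bounded_integrable:
  fixes f :: "'a \<Rightarrow> real"
  assumes "prob_space P" "f \<in> borel_measurable P" "\<And>y. y \<in> space P \<Longrightarrow> \<bar>f y\<bar> \<le> B"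
  shows "integrable P f"
proof -
  interpret prob_space P by fact
  show ?thesis by (rule integrable_const_bound[where B=B]) (use assms in \<open>auto intro!: AE_I2\<close>)
qed

lemma sum_ind_le_card:
  "0 \<le> (\<Sum>i\<in>A. if Q i then 1 else (0::real)) \<and> (\<Sum>i\<in>A. if Q i then 1 else (0::real)) \<le> real (card A)"
proof -
  have "(\<Sum>i\<in>A. if Q i then 1 else (0::real)) \<le> (\<Sum>i\<in>A. 1)" by (rule sum_mono) auto
  then show ?thesis by (auto intro: sum_nonneg)
qed

lemma block:
  fixes P :: "(nat \<Rightarrow> 'y) measure" and Ysp :: "'y measure" and s :: "'x \<Rightarrow> 'y \<Rightarrow> real"
    and x :: "nat \<Rightarrow> 'x" and a :: "nat \<Rightarrow> bool" and lam :: "nat \<Rightarrow> nat"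
  assumes P: "prob_space P" and sP: "sets P = sets (PiM {..<n} (\<lambda>_. Ysp))"
    and s_meas: "\<forall>xv. (\<lambda>yv. s xv yv) \<in> borel_measurable Ysp"
    and exch: "\<And>\<sigma>. bij_betw \<sigma> {..<n} {..<n} \<Longrightarrow> (\<forall>i<n. x (\<sigma> i) = x i) \<Longrightarrow>
        distr P (PiM {..<n} (\<lambda>_. Ysp)) (\<lambda>y. restrict (\<lambda>i. y (\<sigma> i)) {..<n}) = P"
    and lamL: "\<forall>i<n. lam i < L" and Z0: "zeros a {..<n} \<noteq> {}"
  shows "(\<integral>y. (miscov s x a y lam n L \<alpha>)\<^sup>2 \<partial>P) \<le> \<alpha>\<^sup>2"
proof -
  interpret prob_space P by (rule P)
  have mP: "measurable P N = measurable (PiM {..<n} (\<lambda>_. Ysp)) N" for N :: "'b measure"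
    by (rule measurable_cong_sets[OF sP refl])
  define Z0s where "Z0s = zeros a {..<n}"
  have finZ0: "finite Z0s" unfolding Z0s_def zeros_def by auto
  define N0 where "N0 = real (card Z0s)"
  have N0pos: "N0 > 0" unfolding N0_def using Z0 finZ0 unfolding Z0s_def by (auto simp: card_gt_0_iff)
  define Lset where "Lset = lam ` Z0s"
  have finL: "finite Lset" unfolding Lset_def using finZ0 by auto
  have LL: "Lset \<subseteq> {..<L}" unfolding Lset_def Z0s_def zeros_def using lamL by auto
  define Jl where "Jl l = Ubar n a lam l" for l
  define Zl where "Zl l = zeros a (Jl l)" for l
  have Zl_eq: "Zl l = {i\<in>Z0s. lam i = l}" for l
    unfolding Zl_def Jl_def Z0s_def zeros_def Ubar_def Ublk_def by auto
  have Ublk_eq: "Ublk n lam l \<inter> zeros a {..<n} = Zl l" for l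
    unfolding Zl_eq Z0s_def zeros_def Ublk_def by auto
  have JlS: "Jl l \<subseteq> {..<n}" for l unfolding Jl_def Ubar_def Ublk_def by auto
  have finZl: "finite (Zl l)" for l unfolding Zl_eq using finZ0 by auto
  define Nl where "Nl l = real (card (Zl l))" for l
  have Nlpos: "Nl l > 0" if "l \<in> Lset" for l
  proof -
    have "Zl l \<noteq> {}" using that unfolding Zl_eq Lset_def by auto
    then show ?thesis unfolding Nl_def using finZl[of l] by (auto simp: card_gt_0_iff)
  qed
  define al where "al l = alpha_l n L a lam \<alpha> l" for l
  define T where "T l y = (\<Sum>i\<in>Zl l. if y i \<notin> C2 s x a y (Jl l) (al l) (x i) then 1 else (0::real))" for l y
  define D where "D = (\<Sum>l\<in>Lset. (Nl l)\<^sup>2)"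
  have Lne: "Lset \<noteq> {}" unfolding Lset_def Z0s_def using Z0 by auto
  have Dpos: "D > 0" unfolding D_def
    by (rule sum_pos[OF finL Lne]) (use Nlpos in force)
  have Dalt: "(\<Sum>l'<L. (real (card (Ublk n lam l' \<inter> zeros a {..<n})))\<^sup>2) = D"
  proof -
    have "(\<Sum>l'<L. (real (card (Ublk n lam l' \<inter> zeros a {..<n})))\<^sup>2) = (\<Sum>l'<L. (Nl l')\<^sup>2)"
      unfolding Ublk_eq Nl_def ..
    also have "\<dots> = D"
    proof -
      have z: "\<forall>i\<in>{..<L} - Lset. (Nl i)\<^sup>2 = 0"
        unfolding Nl_def Zl_eq Lset_def using finZ0 by (auto simp: card_eq_0_iff)
      show ?thesis unfolding D_def by (rule sum.mono_neutral_right) (use LL z in auto)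
    qed
    finally show ?thesis .
  qed
  have al_eq: "al l = Nl l * N0 / D * \<alpha>" for l
    unfolding al_def alpha_l_def Ublk_eq using Dalt[unfolded Ublk_eq] by (simp add: Nl_def N0_def Z0s_def)
  have miscov_eq: "miscov s x a y lam n L \<alpha> = (\<Sum>l\<in>Lset. T l y) / N0" for y
  proof -
    have "(\<Sum>i\<in>Z0s. if y i \<notin> CU s x a y lam n L \<alpha> i then 1 else (0::real))
        = (\<Sum>l\<in>Lset. \<Sum>i\<in>{i\<in>Z0s. lam i = l}. if y i \<notin> CU s x a y lam n L \<alpha> i then 1 else (0::real))"
      unfolding Lset_def by (rule sum.image_gen[OF finZ0])
    also have "\<dots> = (\<Sum>l\<in>Lset. T l y)"
      unfolding T_def Zl_eq[symmetric]
      by (rule sum.cong[OF refl], rule sum.cong[OF refl]) (auto simp: CU_def Zl_eq Jl_def al_def)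
    finally show ?thesis unfolding miscov_def using Z0 unfolding Z0s_def N0_def by simp
  qed
  have TM: "T l \<in> borel_measurable P" for l
    unfolding T_def mP
  proof (rule borel_measurable_sum)
    fix i assume "i \<in> Zl l"
    then have "i \<in> Jl l" unfolding Zl_def zeros_def by auto
    then show "(\<lambda>y. if y i \<notin> C2 s x a y (Jl l) (al l) (x i) then 1 else (0::real)) \<in> borel_measurable (PiM {..<n} (\<lambda>_. Ysp))"
      by (rule miss_meas[OF s_meas JlS])
  qed
  have Tb: "0 \<le> T l y \<and> T l y \<le> Nl l" for l y unfolding T_def Nl_def by (rule sum_ind_le_card)
  have intT2: "integrable P (\<lambda>y. (T l y)\<^sup>2)" for l
  proof (rule bounded_integrable[OF P, where B="(Nl l)\<^sup>2"])
    show "(\<lambda>y. (T l y)\<^sup>2) \<in> borel_measurable P" using TM[of l] by measurable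
    fix y show "\<bar>(T l y)\<^sup>2\<bar> \<le> (Nl l)\<^sup>2" using Tb[of l y] by (simp add: power_mono)
  qed
  have coreb: "(\<integral>y. (T l y)\<^sup>2 \<partial>P) \<le> (Nl l)\<^sup>2 * (al l)\<^sup>2" if "l \<in> Lset" for l
  proof -
    have ne: "zeros a (Jl l) \<noteq> {}" using Nlpos[OF that] unfolding Nl_def Zl_def by auto
    show ?thesis
      unfolding T_def Nl_def Zl_def
      by (rule core[OF P sP s_meas exch JlS ne])
  qed
  have cs: "(miscov s x a y lam n L \<alpha>)\<^sup>2 \<le> D / N0\<^sup>2 * (\<Sum>l\<in>Lset. (T l y)\<^sup>2 / (Nl l)\<^sup>2)" for y
  proof -
    have "(\<Sum>l\<in>Lset. T l y) = (\<Sum>l\<in>Lset. Nl l * (T l y / Nl l))"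
      by (rule sum.cong[OF refl]) (use Nlpos in \<open>simp add: less_imp_neq[symmetric]\<close>)
    then have "(\<Sum>l\<in>Lset. T l y)\<^sup>2 \<le> (\<Sum>l\<in>Lset. (Nl l)\<^sup>2) * (\<Sum>l\<in>Lset. (T l y / Nl l)\<^sup>2)"
      using Cauchy_Schwarz_ineq_sum[of Nl "\<lambda>l. T l y / Nl l" Lset] by simp
    then have "(\<Sum>l\<in>Lset. T l y)\<^sup>2 / N0\<^sup>2 \<le> D * (\<Sum>l\<in>Lset. (T l y)\<^sup>2 / (Nl l)\<^sup>2) / N0\<^sup>2"
      unfolding D_def using N0pos by (intro divide_right_mono) (auto simp: power_divide)
    then show ?thesis unfolding miscov_eq by (simp add: power_divide)
  qed
  have "(\<integral>y. (miscov s x a y lam n L \<alpha>)\<^sup>2 \<partial>P) \<le> (\<integral>y. D / N0\<^sup>2 * (\<Sum>l\<in>Lset. (T l y)\<^sup>2 / (Nl l)\<^sup>2) \<partial>P)"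
  proof (rule Bochner_Integration.integral_mono')
    show "integrable P (\<lambda>y. D / N0\<^sup>2 * (\<Sum>l\<in>Lset. (T l y)\<^sup>2 / (Nl l)\<^sup>2))"
      using intT2 by (intro integrable_mult_right Bochner_Integration.integrable_sum integrable_divide) auto
    show "0 \<le> D / N0\<^sup>2 * (\<Sum>l\<in>Lset. (T l y)\<^sup>2 / (Nl l)\<^sup>2)" for y
      using Dpos by (intro mult_nonneg_nonneg sum_nonneg) auto
  qed (rule cs)
  also have "\<dots> = D / N0\<^sup>2 * (\<Sum>l\<in>Lset. (\<integral>y. (T l y)\<^sup>2 \<partial>P) / (Nl l)\<^sup>2)"
    using intT2 by (simp add: Bochner_Integration.integral_sum integrable_divide)
  also have "\<dots> \<le> D / N0\<^sup>2 * (\<Sum>l\<in>Lset. (al l)\<^sup>2)"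
  proof (rule mult_left_mono)
    show "(\<Sum>l\<in>Lset. (\<integral>y. (T l y)\<^sup>2 \<partial>P) / (Nl l)\<^sup>2) \<le> (\<Sum>l\<in>Lset. (al l)\<^sup>2)"
    proof (rule sum_mono)
      fix l assume l: "l \<in> Lset"
      have "(\<integral>y. (T l y)\<^sup>2 \<partial>P) / (Nl l)\<^sup>2 \<le> (Nl l)\<^sup>2 * (al l)\<^sup>2 / (Nl l)\<^sup>2"
        by (rule divide_right_mono[OF coreb[OF l]]) simp
      then show "(\<integral>y. (T l y)\<^sup>2 \<partial>P) / (Nl l)\<^sup>2 \<le> (al l)\<^sup>2" using Nlpos[OF l] by simp
    qed
    show "0 \<le> D / N0\<^sup>2" using Dpos by simp
  qed
  also have "\<dots> = \<alpha>\<^sup>2"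
  proof -
    have "(\<Sum>l\<in>Lset. (al l)\<^sup>2) = (N0 / D * \<alpha>)\<^sup>2 * D"
      unfolding al_eq D_def sum_distrib_left by (rule sum.cong[OF refl]) (simp add: power_mult_distrib power_divide mult_ac)
    then show ?thesis using Dpos N0pos by (simp add: power2_eq_square field_simps)
  qed
  finally show ?thesis .
qed



lemma Pi_cdf_cong: "(\<forall>i\<in>J. y i = y' i) \<Longrightarrow> Pi_cdf s x a y J = Pi_cdf s x a y' J"
  unfolding Pi_cdf_def sbar_def by (intro ext arg_cong2[where f="(+)"] sum.cong refl) auto

lemma miscov_restrict:
  assumes y: "\<forall>i<n. y i = y' i" and l: "\<forall>i<n. lb i = lb' i"
  shows "miscov s x a y lb n L \<alpha> = miscov s x a y' lb' n L \<alpha>"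
proof -
  have ublk: "Ublk n lb k = Ublk n lb' k" for k unfolding Ublk_def using l by auto
  have ubar: "Ubar n a lb k = Ubar n a lb' k" for k unfolding Ubar_def ublk ..
  have al: "alpha_l n L a lb \<alpha> k = alpha_l n L a lb' \<alpha> k" for k unfolding alpha_l_def ublk ..
  have sub: "Ubar n a lb k \<subseteq> {..<n}" for k unfolding Ubar_def Ublk_def by auto
  have cu: "CU s x a y lb n L \<alpha> i = CU s x a y' lb' n L \<alpha> i" if "i < n" for i
  proof -
    have pc: "Pi_cdf s x a y (Ubar n a lb' (lb' i)) = Pi_cdf s x a y' (Ubar n a lb' (lb' i))"
      by (rule Pi_cdf_cong) (use y sub[of "lb' i", unfolded ubar] in blast)
    show ?thesis unfolding CU_def ubar al using l that by (simp add: C2_def pc)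
  qed
  show ?thesis unfolding miscov_def
    by (intro if_cong refl arg_cong2[where f="(/)"] sum.cong) (auto simp: zeros_def y cu)
qed

lemma sum_if_card: "finite A \<Longrightarrow> (\<Sum>i\<in>A. if Q i then 1 else (0::real)) = real (card {i\<in>A. Q i})"
  by (simp add: sum.If_cases Int_def conj_commute)

theorem corollary2:
  fixes M :: "'a measure" and Ysp :: "'y measure"
    and s :: "'x \<Rightarrow> 'y \<Rightarrow> real"
    and x :: "nat \<Rightarrow> 'x" and a :: "nat \<Rightarrow> bool"
    and Y :: "'a \<Rightarrow> nat \<Rightarrow> 'y" and lab :: "'a \<Rightarrow> nat \<Rightarrow> nat"
    and n L :: nat and \<alpha> :: real
  assumes M: "prob_space M"
    and s_meas: "\<forall>xv. (\<lambda>yv. s xv yv) \<in> borel_measurable Ysp"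
    and Y_meas: "(\<lambda>\<omega>. restrict (Y \<omega>) {..<n}) \<in> measurable M (PiM {..<n} (\<lambda>_. Ysp))"
    and exch: "\<forall>\<sigma>. bij_betw \<sigma> {..<n} {..<n} \<and> (\<forall>i<n. x (\<sigma> i) = x i) \<longrightarrow>
        distr M (PiM {..<n} (\<lambda>_. Ysp)) (\<lambda>\<omega>. restrict (\<lambda>i. Y \<omega> (\<sigma> i)) {..<n})
      = distr M (PiM {..<n} (\<lambda>_. Ysp)) (\<lambda>\<omega>. restrict (Y \<omega>) {..<n})"
    and lab_range: "\<forall>\<omega>. \<forall>i<n. lab \<omega> i < L"
    and lab_meas: "(\<lambda>\<omega>. restrict (lab \<omega>) {..<n})
                     \<in> measurable M (PiM {..<n} (\<lambda>_. count_space UNIV))"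
    and indep: "\<forall>A \<in> sets (PiM {..<n} (\<lambda>_. count_space UNIV)).
                 \<forall>B \<in> sets (PiM {..<n} (\<lambda>_. Ysp)).
        measure M {\<omega> \<in> space M. restrict (lab \<omega>) {..<n} \<in> A \<and> restrict (Y \<omega>) {..<n} \<in> B}
      = measure M {\<omega> \<in> space M. restrict (lab \<omega>) {..<n} \<in> A}
        * measure M {\<omega> \<in> space M. restrict (Y \<omega>) {..<n} \<in> B}"
    and N0_pos: "\<exists>i<n. \<not> a i"
  shows "(\<integral>\<omega>. (miscov s x a (Y \<omega>) (lab \<omega>) n L \<alpha>)\<^sup>2 \<partial>M) \<le> \<alpha>\<^sup>2"
proof -
  interpret prob_space M by (rule M)
  define PI where "PI = PiM {..<n} (\<lambda>_. Ysp)"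
  define LS where "LS = (PiM {..<n} (\<lambda>_. count_space UNIV) :: (nat \<Rightarrow> nat) measure)"
  define Yr where "Yr \<omega> = restrict (Y \<omega>) {..<n}" for \<omega>
  define Lr where "Lr \<omega> = restrict (lab \<omega>) {..<n}" for \<omega>
  have YrM: "Yr \<in> measurable M PI" unfolding Yr_def PI_def by (rule Y_meas)
  have LrM: "Lr \<in> measurable M LS" unfolding Lr_def LS_def by (rule lab_meas)
  define P where "P = distr M PI Yr"
  have Pp: "prob_space P" unfolding P_def by (rule prob_space_distr[OF YrM])
  have sP: "sets P = sets (PiM {..<n} (\<lambda>_. Ysp))" unfolding P_def PI_def by simp
  have exP: "distr P (PiM {..<n} (\<lambda>_. Ysp)) (\<lambda>y. restrict (\<lambda>i. y (\<sigma> i)) {..<n}) = P"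
    if b: "bij_betw \<sigma> {..<n} {..<n}" and xs: "\<forall>i<n. x (\<sigma> i) = x i" for \<sigma>
  proof -
    have \<sigma>n: "\<sigma> i \<in> {..<n}" if "i \<in> {..<n}" for i using b that by (auto simp: bij_betw_def)
    have RM: "(\<lambda>y. restrict (\<lambda>i. y (\<sigma> i)) {..<n}) \<in> measurable PI PI" unfolding PI_def
      by (rule measurable_restrict) (rule measurable_component_singleton[OF \<sigma>n])
    have comp: "(\<lambda>y. restrict (\<lambda>i. y (\<sigma> i)) {..<n}) \<circ> Yr = (\<lambda>\<omega>. restrict (\<lambda>i. Y \<omega> (\<sigma> i)) {..<n})"
      using \<sigma>n by (auto simp: Yr_def fun_eq_iff restrict_def)
    have "distr P PI (\<lambda>y. restrict (\<lambda>i. y (\<sigma> i)) {..<n}) = distr M PI ((\<lambda>y. restrict (\<lambda>i. y (\<sigma> i)) {..<n}) \<circ> Yr)"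
      unfolding P_def by (rule distr_distr[OF RM YrM])
    also have "\<dots> = P" unfolding comp P_def Yr_def PI_def using exch b xs by blast
    finally show ?thesis unfolding PI_def .
  qed
  have Z0: "zeros a {..<n} \<noteq> {}" using N0_pos unfolding zeros_def by auto
  define Lam where "Lam = PiE {..<n} (\<lambda>_. {..<L})"
  have finLam: "finite Lam" unfolding Lam_def by (rule finite_PiE) auto
  have LrLam: "Lr \<omega> \<in> Lam" for \<omega> unfolding Lr_def Lam_def using lab_range by auto
  define \<psi> where "\<psi> lam y = (miscov s x a y lam n L \<alpha>)\<^sup>2" for lam y
  define Gs where "Gs lam = {\<omega> \<in> space M. Lr \<omega> = lam}" for lam
  have GsM: "Gs lam \<in> sets M" if "lam \<in> Lam" for lam
  proof -
    have ext: "lam \<in> extensional {..<n}" using that unfolding Lam_def PiE_def by auto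
    have "{lam} = PiE {..<n} (\<lambda>i. {lam i})" by (rule PiE_singleton[symmetric, OF ext])
    then have "{lam} \<in> sets LS" unfolding LS_def by (auto intro!: sets_PiM_I_finite)
    then have "Lr -` {lam} \<inter> space M \<in> sets M" by (rule measurable_sets[OF LrM])
    moreover have "Lr -` {lam} \<inter> space M = Gs lam" unfolding Gs_def by auto
    ultimately show ?thesis by simp
  qed
  have psiM: "\<psi> lam \<in> borel_measurable PI" if "lam \<in> Lam" for lam
  proof -
    have sm: "(\<lambda>y. \<Sum>i\<in>zeros a {..<n}. if y i \<notin> CU s x a y lam n L \<alpha> i then 1 else (0::real)) \<in> borel_measurable PI"
      unfolding PI_def
    proof (rule borel_measurable_sum)
      fix i assume i: "i \<in> zeros a {..<n}"
      have "i \<in> Ubar n a lam (lam i)" using i unfolding Ubar_def Ublk_def zeros_def by auto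
      moreover have "Ubar n a lam (lam i) \<subseteq> {..<n}" unfolding Ubar_def Ublk_def by auto
      ultimately show "(\<lambda>y. if y i \<notin> CU s x a y lam n L \<alpha> i then 1 else (0::real)) \<in> borel_measurable (PiM {..<n} (\<lambda>_. Ysp))"
        unfolding CU_def by (intro miss_meas[OF s_meas])
    qed
    have eqm: "(\<lambda>y. miscov s x a y lam n L \<alpha>) = (\<lambda>y. (\<Sum>i\<in>zeros a {..<n}. if y i \<notin> CU s x a y lam n L \<alpha> i then 1 else (0::real)) / real (card (zeros a {..<n})))"
      using Z0 by (simp add: miscov_def)
    have "(\<lambda>y. miscov s x a y lam n L \<alpha>) \<in> borel_measurable PI"
      unfolding eqm using sm by measurable
    then show ?thesis unfolding \<psi>_def by measurable
  qed
  have psi_fin: "finite (\<psi> lam ` space PI)" for lam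
  proof -
    define N0 where "N0 = card (zeros a {..<n})"
    have finZ: "finite (zeros a {..<n})" unfolding zeros_def by auto
    have "\<psi> lam y \<in> (\<lambda>k. (real k / real N0)\<^sup>2) ` {..N0}" for y
    proof -
      have "miscov s x a y lam n L \<alpha> = real (card {i \<in> zeros a {..<n}. y i \<notin> CU s x a y lam n L \<alpha> i}) / real N0"
        unfolding miscov_def N0_def using Z0 finZ by (simp add: sum_if_card)
      moreover have "card {i \<in> zeros a {..<n}. y i \<notin> CU s x a y lam n L \<alpha> i} \<le> N0"
        unfolding N0_def using finZ by (intro card_mono) auto
      ultimately show ?thesis unfolding \<psi>_def by auto
    qed
    then have "\<psi> lam ` space PI \<subseteq> (\<lambda>k. (real k / real N0)\<^sup>2) ` {..N0}" by auto
    then show ?thesis by (rule finite_subset) auto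
  qed
  have psi_bd: "\<bar>\<psi> lam y\<bar> \<le> 1" for lam y
  proof -
    have finZ: "finite (zeros a {..<n})" unfolding zeros_def by auto
    have "0 \<le> miscov s x a y lam n L \<alpha> \<and> miscov s x a y lam n L \<alpha> \<le> 1"
      unfolding miscov_def using Z0 finZ sum_ind_le_card[where A="zeros a {..<n}" and Q="\<lambda>i. y i \<notin> CU s x a y lam n L \<alpha> i"]
      by (auto simp: divide_le_eq_1 card_gt_0_iff)
    then show ?thesis unfolding \<psi>_def by (simp add: abs_le_iff power_le_one)
  qed
  have trm: "(\<integral>\<omega>. (if Lr \<omega> = lam then \<psi> lam (Yr \<omega>) else 0) \<partial>M) = measure M (Gs lam) * (\<integral>y. \<psi> lam y \<partial>P)"
    if lam: "lam \<in> Lam" for lam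
  proof -
    have "(\<integral>\<omega>. (if Lr \<omega> = lam then \<psi> lam (Yr \<omega>) else 0) \<partial>M)
        = measure M {\<omega> \<in> space M. Lr \<omega> = lam} * (\<integral>\<omega>. \<psi> lam (Yr \<omega>) \<partial>M)"
    proof (rule indep_int[OF M YrM _ _ psiM[OF lam] psi_fin])
      show "{\<omega> \<in> space M. Lr \<omega> = lam} \<in> sets M" using GsM[OF lam] unfolding Gs_def .
      have ext: "lam \<in> extensional {..<n}" using lam unfolding Lam_def PiE_def by auto
      have "{lam} = PiE {..<n} (\<lambda>i. {lam i})" by (rule PiE_singleton[symmetric, OF ext])
      then have sing: "{lam} \<in> sets LS" unfolding LS_def by (auto intro!: sets_PiM_I_finite)
      show "\<forall>B\<in>sets PI. measure M {\<omega> \<in> space M. Lr \<omega> = lam \<and> Yr \<omega> \<in> B}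
          = measure M {\<omega> \<in> space M. Lr \<omega> = lam} * measure M {\<omega> \<in> space M. Yr \<omega> \<in> B}"
        using indep sing unfolding LS_def PI_def Lr_def Yr_def by auto
    qed
    also have "(\<integral>\<omega>. \<psi> lam (Yr \<omega>) \<partial>M) = (\<integral>y. \<psi> lam y \<partial>P)"
      unfolding P_def by (rule integral_distr[symmetric, OF YrM psiM[OF lam]])
    finally show ?thesis unfolding Gs_def .
  qed
  have intterm: "integrable M (\<lambda>\<omega>. if Lr \<omega> = lam then \<psi> lam (Yr \<omega>) else 0)" if lam: "lam \<in> Lam" for lam
  proof (rule bounded_integrable[OF M, where B=1])
    have m1: "(\<lambda>\<omega>. indicator (Gs lam) \<omega> * \<psi> lam (Yr \<omega>) :: real) \<in> borel_measurable M"
      using borel_measurable_indicator[OF GsM[OF lam]] measurable_compose[OF YrM psiM[OF lam]]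
      by (rule borel_measurable_times)
    show "(\<lambda>\<omega>. if Lr \<omega> = lam then \<psi> lam (Yr \<omega>) else 0) \<in> borel_measurable M"
      by (rule measurable_cong[THEN iffD1, OF _ m1]) (simp add: Gs_def indicator_def)
    show "\<bar>if Lr \<omega> = lam then \<psi> lam (Yr \<omega>) else 0\<bar> \<le> 1" for \<omega> using psi_bd by simp
  qed
  have blk: "(\<integral>y. \<psi> lam y \<partial>P) \<le> \<alpha>\<^sup>2" if lam: "lam \<in> Lam" for lam
    unfolding \<psi>_def
    by (rule block[OF Pp sP s_meas exP]) (use lam Z0 in \<open>auto simp: Lam_def\<close>)
  have tot: "(\<Sum>lam\<in>Lam. measure M (Gs lam)) = 1"
  proof -
    have GsS: "Gs lam \<inter> space M = Gs lam" for lam unfolding Gs_def by auto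
    have iG: "integrable M (indicator (Gs lam) :: _ \<Rightarrow> real)" if "lam \<in> Lam" for lam
      using GsM[OF that] by (intro integrable_real_indicator) (auto simp: less_top[symmetric])
    have "(\<Sum>lam\<in>Lam. measure M (Gs lam)) = (\<Sum>lam\<in>Lam. (\<integral>\<omega>. indicator (Gs lam) \<omega> \<partial>M))"
      by (simp add: GsS)
    also have "\<dots> = (\<integral>\<omega>. (\<Sum>lam\<in>Lam. indicator (Gs lam) \<omega>) \<partial>M)"
      using iG by (simp add: Bochner_Integration.integral_sum)
    also have "\<dots> = (\<integral>\<omega>. 1 \<partial>M)"
    proof (rule Bochner_Integration.integral_cong[OF refl])
      fix \<omega> assume "\<omega> \<in> space M"
      then have "(\<Sum>lam\<in>Lam. indicator (Gs lam) \<omega> :: real) = (\<Sum>lam\<in>Lam. if Lr \<omega> = lam then 1 else 0)"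
        by (intro sum.cong) (auto simp: Gs_def indicator_def)
      then show "(\<Sum>lam\<in>Lam. indicator (Gs lam) \<omega>) = (1::real)"
        using finLam LrLam[of \<omega>] by (simp add: sum.delta')
    qed
    also have "\<dots> = 1" using prob_space by simp
    finally show ?thesis .
  qed
  have "(\<integral>\<omega>. (miscov s x a (Y \<omega>) (lab \<omega>) n L \<alpha>)\<^sup>2 \<partial>M)
      = (\<integral>\<omega>. (\<Sum>lam\<in>Lam. if Lr \<omega> = lam then \<psi> lam (Yr \<omega>) else 0) \<partial>M)"
  proof (rule Bochner_Integration.integral_cong[OF refl])
    fix \<omega>
    have "miscov s x a (Y \<omega>) (lab \<omega>) n L \<alpha> = miscov s x a (Yr \<omega>) (Lr \<omega>) n L \<alpha>"
      by (rule miscov_restrict) (auto simp: Yr_def Lr_def)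
    then show "(miscov s x a (Y \<omega>) (lab \<omega>) n L \<alpha>)\<^sup>2 = (\<Sum>lam\<in>Lam. if Lr \<omega> = lam then \<psi> lam (Yr \<omega>) else 0)"
      using finLam LrLam[of \<omega>] by (simp add: sum.delta' \<psi>_def)
  qed
  also have "\<dots> = (\<Sum>lam\<in>Lam. measure M (Gs lam) * (\<integral>y. \<psi> lam y \<partial>P))"
    using intterm trm by (simp add: Bochner_Integration.integral_sum)
  also have "\<dots> \<le> (\<Sum>lam\<in>Lam. measure M (Gs lam) * \<alpha>\<^sup>2)"
    by (rule sum_mono, rule mult_left_mono) (auto intro: blk)
  also have "\<dots> = \<alpha>\<^sup>2" using tot by (simp add: sum_distrib_right[symmetric])
  finally show ?thesis .
qed


end
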